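(* Let $b\ge2$, $n\ge1$ be integers and $\mathcal D=\{d,\dots,d+b-1\}$ a set of consecutive integers containing $0$. For $i,j\in\Omega_n(b,\mathcal D)$, the transition probability $p_{i,j}=\Pr(C_{t+1}=j\mid C_t=i)$ of the $n$-carry process over $(b,\mathcal D)$ equals $$p_{i,j}=\frac{1}{b^n}\sum_{k=0}^{\,j-\left\lfloor \frac{d(n-1)+i}{b}\right\rfloor}(-1)^k\binom{n+1}{k}\binom{n+b(j+1-k)-d(n-1)-i-1}{n},$$ (an empty sum being $0$; all upper entries of the binomial coefficients in the range of summation are nonnegative integers, and $\binom{N}{n}=0$ for $0\le N<n$).
   Context: Carries process over $(b,\mathcal D)$: let $\{X_{k,i}\}_{1\le k\le n,\ i\ge 0}$ be independent random variables, each uniformly distributed on $\mathcal D$. Set $C_0=0$; for $i\ge 0$ let $A_i$ be the unique element of $\mathcal D$ with $A_i\equiv C_i+X_{1,i}+\dots+X_{n,i}\pmod b$, and set $C_{i+1}=(C_i+X_{1,i}+\dots+X_{n,i}-A_i)/b$. The state space $\Omega_n(b,\mathcal D)$ is the set of integers $c$ with $\Pr(C_i=c)>0$ for some $i\ge0$. *)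

theory Defs
  imports "HOL-Probability.Probability" "HOL-Number_Theory.Number_Theory"
begin

definition digits :: "nat \<Rightarrow> int \<Rightarrow> int set" where
  "digits b d = {d .. d + int b - 1}"

definition digit_tuples :: "nat \<Rightarrow> nat \<Rightarrow> int \<Rightarrow> int list set" where
  "digit_tuples n b d = {xs. length xs = n \<and> set xs \<subseteq> digits b d}"

definition carry_digit :: "nat \<Rightarrow> int \<Rightarrow> int \<Rightarrow> int list \<Rightarrow> int" where
  "carry_digit b d c xs =
     (THE a. a \<in> digits b d \<and> [a = c + sum_list xs] (mod int b))"

definition carry_step :: "nat \<Rightarrow> int \<Rightarrow> int \<Rightarrow> int list \<Rightarrow> int" where
  "carry_step b d c xs = (c + sum_list xs - carry_digit b d c xs) div int b"

definition digit_law :: "nat \<Rightarrow> nat \<Rightarrow> int \<Rightarrow> int list pmf" where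
  "digit_law n b d = pmf_of_set (digit_tuples n b d)"

primrec carry_dist :: "nat \<Rightarrow> nat \<Rightarrow> int \<Rightarrow> nat \<Rightarrow> int pmf" where
  "carry_dist n b d 0 = return_pmf 0"
| "carry_dist n b d (Suc t) =
     bind_pmf (carry_dist n b d t) (\<lambda>c. map_pmf (carry_step b d c) (digit_law n b d))"

definition carry_states :: "nat \<Rightarrow> nat \<Rightarrow> int \<Rightarrow> int set" where
  "carry_states n b d = {c. \<exists>t. pmf (carry_dist n b d t) c > 0}"

text \<open>Transition probability Pr(C_{t+1} = j | C_t = i): law of the next state
  given current state i, using the fresh independent digits of step t.\<close>
definition carry_trans :: "nat \<Rightarrow> nat \<Rightarrow> int \<Rightarrow> int \<Rightarrow> int \<Rightarrow> real" where
  "carry_trans n b d i j = pmf (map_pmf (carry_step b d i) (digit_law n b d)) j"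

end

theory Submission
  imports Defs
begin

definition Cp :: "int \<Rightarrow> nat \<Rightarrow> int" where
  "Cp N k = (if N < 0 then 0 else int (nat N choose k))"

lemma Cp_pascal: "Cp (M+1) (Suc k) = Cp M (Suc k) + Cp M k"
proof (cases "M \<ge> 0")
  case True
  then have "nat (M+1) = Suc (nat M)" by simp
  then show ?thesis using True by (simp add: Cp_def)
next
  case False
  then show ?thesis by (cases "M = -1") (auto simp: Cp_def)
qed

lemma hockey: "(\<Sum>y<b. Cp (M - int y) k) = Cp (M+1) (Suc k) - Cp (M + 1 - int b) (Suc k)"
proof (induction b)
  case 0 then show ?case by simp
next
  case (Suc b)
  have "Cp (M + 1 - int b) (Suc k) = Cp (M - int b) (Suc k) + Cp (M - int b) k"
    using Cp_pascal[of "M - int b" k] by (simp add: algebra_simps)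
  then show ?case using Suc by simp
qed

lemma comb:
  fixes g :: "nat \<Rightarrow> int"
  shows "(\<Sum>k\<le>n. (-1)^k * int (n choose k) * (g k - g (Suc k))) =
         (\<Sum>k\<le>Suc n. (-1)^k * int (Suc n choose k) * g k)"
proof -
  have "(\<Sum>k\<le>Suc n. (-1)^k * int (Suc n choose k) * g k) =
        g 0 + (\<Sum>k\<le>n. (-1)^(Suc k) * int (Suc n choose Suc k) * g (Suc k))"
    unfolding sum.atMost_Suc_shift by simp
  also have "\<dots> = g 0 + (\<Sum>k\<le>n. (-1)^(Suc k) * int (n choose Suc k) * g (Suc k))
      + (\<Sum>k\<le>n. (-1)^(Suc k) * int (n choose k) * g (Suc k))"
    by (simp add: sum.distrib[symmetric] algebra_simps)
  also have "g 0 + (\<Sum>k\<le>n. (-1)^(Suc k) * int (n choose Suc k) * g (Suc k))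
      = (\<Sum>k\<le>Suc n. (-1)^k * int (n choose k) * g k)"
    unfolding sum.atMost_Suc_shift by simp
  also have "\<dots> = (\<Sum>k\<le>n. (-1)^k * int (n choose k) * g k)"
    by simp
  finally show ?thesis by (simp add: sum_subtractf sum_negf algebra_simps)
qed

definition cY :: "nat \<Rightarrow> nat \<Rightarrow> int list set" where
  "cY b n = {ys. set ys \<subseteq> {0..<int b} \<and> length ys = n}"

definition cF :: "nat \<Rightarrow> nat \<Rightarrow> int \<Rightarrow> int" where
  "cF b n T = (\<Sum>ys\<in>cY b n. if sum_list ys \<le> T then 1 else 0)"

lemma finite_Y: "finite (cY b n)"
  unfolding cY_def by (rule finite_lists_length_eq) simp

lemma int_image_lt: "int ` {..<b} = {0..<int b}"
  by (auto simp: image_iff intro!: bexI[of _ "nat x" for x])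

lemma F_Suc: "cF b (Suc n) T = (\<Sum>y<b. cF b n (T - int y))"
proof -
  have "cF b (Suc n) T = (\<Sum>p\<in>cY b n \<times> {0..<int b}. if sum_list (snd p # fst p) \<le> T then 1 else 0)"
    unfolding cF_def cY_def lists_length_Suc_eq
    by (subst sum.reindex) (auto simp: inj_split_Cons case_prod_beta)
  also have "\<dots> = (\<Sum>ys\<in>cY b n. \<Sum>y\<in>{0..<int b}. if sum_list ys \<le> T - y then 1 else 0)"
    by (simp add: sum.cartesian_product case_prod_beta add.commute le_diff_eq)
  also have "\<dots> = (\<Sum>y\<in>{0..<int b}. cF b n (T - y))"
    unfolding cF_def by (rule sum.swap)
  also have "\<dots> = (\<Sum>y<b. cF b n (T - int y))"
    by (simp add: int_image_lt[symmetric] sum.reindex)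
  finally show ?thesis .
qed

lemma F_closed: "cF b n T = (\<Sum>k\<le>n. (-1)^k * int (n choose k) * Cp (T - int b * int k + int n) n)"
proof (induction n arbitrary: T)
  case 0
  have "cY b 0 = {[]}" by (auto simp: cY_def)
  then show ?case by (simp add: cF_def Cp_def)
next
  case (Suc n)
  have "cF b (Suc n) T = (\<Sum>y<b. \<Sum>k\<le>n. (-1)^k * int (n choose k) * Cp (T - int y - int b * int k + int n) n)"
    by (simp add: F_Suc Suc.IH)
  also have "\<dots> = (\<Sum>k\<le>n. (-1)^k * int (n choose k) * (\<Sum>y<b. Cp ((T - int b * int k + int n) - int y) n))"
    by (subst sum.swap) (simp add: sum_distrib_left algebra_simps)
  also have "\<dots> = (\<Sum>k\<le>n. (-1)^k * int (n choose k) *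
      (Cp (T - int b * int k + int (Suc n)) (Suc n) - Cp (T - int b * int (Suc k) + int (Suc n)) (Suc n)))"
  proof (rule sum.cong[OF refl])
    fix k assume "k \<in> {..n}"
    show "(-1)^k * int (n choose k) * (\<Sum>y<b. Cp ((T - int b * int k + int n) - int y) n) =
      (-1)^k * int (n choose k) *
      (Cp (T - int b * int k + int (Suc n)) (Suc n) - Cp (T - int b * int (Suc k) + int (Suc n)) (Suc n))"
      unfolding hockey by (simp add: algebra_simps)
  qed
  also have "\<dots> = (\<Sum>k\<le>Suc n. (-1)^k * int (Suc n choose k) * Cp (T - int b * int k + int (Suc n)) (Suc n))"
    by (rule comb)
  finally show ?case .
qed


lemma div_iff: "0 < (b::int) \<Longrightarrow> (x div b = j) \<longleftrightarrow> b*j \<le> x \<and> x < b*j + b"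
proof -
  assume b: "0 < b"
  have e: "(x + (-j)*b) div b = -j + x div b"
    using b by (intro div_mult_self1) simp
  have "x div b = j \<longleftrightarrow> (x - b*j) div b = 0"
    using e by (simp add: algebra_simps) linarith
  also have "\<dots> \<longleftrightarrow> 0 \<le> x - b*j \<and> x - b*j < b" using b by (auto simp: zdiv_eq_0_iff)
  finally show ?thesis by auto
qed

lemma carry_digit_eq:
  assumes "b > 0"
  shows "carry_digit b d c xs = d + (c + sum_list xs - d) mod int b"
  unfolding carry_digit_def
proof (rule the_equality)
  define r where "r = (c + sum_list xs - d) mod int b"
  have r: "0 \<le> r" "r < int b" using assms by (simp_all add: r_def)
  have e: "c + sum_list xs = (d + r) + int b * ((c + sum_list xs - d) div int b)"
    unfolding r_def using mult_div_mod_eq[of "int b" "c + sum_list xs - d"] by linarith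
  define q where "q = (c + sum_list xs - d) div int b"
  have e2: "c + sum_list xs = (d + r) + int b * q" using e by (simp add: q_def)
  have "(c + sum_list xs) mod int b = ((d + r) + int b * q) mod int b"
    by (rule arg_cong[OF e2])
  also have "\<dots> = (d + r) mod int b" by simp
  finally have "(c + sum_list xs) mod int b = (d + r) mod int b" .
  then show "d + (c + sum_list xs - d) mod int b \<in> digits b d \<and>
        [d + (c + sum_list xs - d) mod int b = c + sum_list xs] (mod int b)"
    using r by (simp add: digits_def cong_def r_def[symmetric])
next
  fix a assume a: "a \<in> digits b d \<and> [a = c + sum_list xs] (mod int b)"
  then have "(a - d) mod int b = (c + sum_list xs - d) mod int b"
    by (intro mod_diff_cong) (simp_all add: cong_def)
  moreover have "(a - d) mod int b = a - d" using a assms by (simp add: digits_def)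
  ultimately show "a = d + (c + sum_list xs - d) mod int b" by simp
qed

lemma carry_step_eq:
  assumes "b > 0"
  shows "carry_step b d c xs = (c + sum_list xs - d) div int b"
proof -
  have "carry_step b d c xs = ((c + sum_list xs - d) - (c + sum_list xs - d) mod int b) div int b"
    unfolding carry_step_def carry_digit_eq[OF assms] by (simp add: algebra_simps)
  also have "\<dots> = (int b * ((c + sum_list xs - d) div int b)) div int b"
    by (simp add: minus_mod_eq_mult_div)
  also have "\<dots> = (c + sum_list xs - d) div int b" using assms by simp
  finally show ?thesis .
qed

lemma sum_list_shift: "sum_list (map (\<lambda>x. x + d) ys) = sum_list ys + int (length ys) * (d::int)"
  by (induction ys) (auto simp: algebra_simps)

lemma Cp_eq: "n \<ge> 1 \<Longrightarrow> Cp X n = int (nat X choose n)"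
  by (simp add: Cp_def)

lemma card_filter_int: "finite A \<Longrightarrow> int (card {x\<in>A. P x}) = (\<Sum>x\<in>A. if P x then 1 else 0)"
  by (simp add: sum.inter_filter[symmetric])

lemma int_image_atMost: "int ` {..k} = {0..int k}"
  by (auto simp: image_iff intro!: bexI[of _ "nat x" for x])

theorem theorem2:
  fixes b n :: nat and d i j :: int
  assumes "b \<ge> 2" and "n \<ge> 1"
    and "d \<le> 0" and "0 \<le> d + int b - 1"
    and "i \<in> carry_states n b d" and "j \<in> carry_states n b d"
  shows "carry_trans n b d i j =
    1 / real b ^ n *
    (\<Sum>k\<in>{0 .. j - \<lfloor>real_of_int (d * (int n - 1) + i) / real b\<rfloor>}.
        (-1) ^ nat k * real ((n + 1) choose nat k) *
        real (nat (int n + int b * (j + 1 - k) - d * (int n - 1) - i - 1) choose n))"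
proof -
  have b0: "b > 0" using assms by simp
  have n1: "n \<ge> 1" using assms by simp
  define m where "m = d * (int n - 1) + i"
  define N where "N = int n + int b * (j + 1) - m - 1"
  define DT where "DT = digit_tuples n b d"
  have DT_eq: "DT = {xs. set xs \<subseteq> digits b d \<and> length xs = n}"
    unfolding DT_def digit_tuples_def by auto
  have finD: "finite (digits b d)" by (simp add: digits_def)
  have finDT: "finite DT" unfolding DT_eq
    by (rule finite_lists_length_eq) (simp add: digits_def)
  have cardD: "card (digits b d) = b" by (simp add: digits_def)
  have cardDT: "card DT = b^n"
    unfolding DT_eq card_lists_length_eq[OF finD] cardD ..
  have neDT: "DT \<noteq> {}" using cardDT b0 by (metis card.empty power_not_zero not_gr0)
  have trans: "carry_trans n b d i j = real (card {xs\<in>DT. carry_step b d i xs = j}) / real b ^ n"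
  proof -
    have e: "DT \<inter> carry_step b d i -` {j} = {xs\<in>DT. carry_step b d i xs = j}" by auto
    have "measure (pmf_of_set DT) (carry_step b d i -` {j}) =
        real (card (DT \<inter> carry_step b d i -` {j})) / real (card DT)"
      by (rule measure_pmf_of_set[OF neDT finDT])
    then show ?thesis
      unfolding carry_trans_def digit_law_def pmf_map DT_def[symmetric] e cardDT by simp
  qed
  let ?P = "\<lambda>ys. (m + sum_list ys) div int b = j"
  have img: "{xs\<in>DT. carry_step b d i xs = j} = map (\<lambda>x. x + d) ` {ys \<in> cY b n. ?P ys}"
  proof (intro equalityI subsetI)
    fix xs assume xs: "xs \<in> {xs\<in>DT. carry_step b d i xs = j}"
    define ys where "ys = map (\<lambda>x. x - d) xs"
    have "xs = map (\<lambda>x. x + d) ys" by (simp add: ys_def comp_def)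
    moreover have "ys \<in> cY b n" using xs DT_eq
      by (auto simp: ys_def cY_def digits_def)
    moreover have "?P ys"
    proof -
      have len: "length ys = n" using xs DT_eq by (simp add: ys_def)
      have "sum_list xs = sum_list ys + int n * d"
        using sum_list_shift[of d ys] len \<open>xs = map (\<lambda>x. x + d) ys\<close> by simp
      then have "i + sum_list xs - d = m + sum_list ys" by (simp add: m_def algebra_simps)
      moreover have "(i + sum_list xs - d) div int b = j"
        using xs carry_step_eq[OF b0, of d i xs] by simp
      ultimately show ?thesis by simp
    qed
    ultimately show "xs \<in> map (\<lambda>x. x + d) ` {ys \<in> cY b n. ?P ys}" by blast
  next
    fix xs assume "xs \<in> map (\<lambda>x. x + d) ` {ys \<in> cY b n. ?P ys}"
    then obtain ys where ys: "ys \<in> cY b n" "?P ys" "xs = map (\<lambda>x. x + d) ys" by blast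
    have "xs \<in> DT" using ys DT_eq by (auto simp: cY_def digits_def)
    moreover have "carry_step b d i xs = j"
    proof -
      have len: "length ys = n" using ys by (simp add: cY_def)
      have "sum_list xs = sum_list ys + int n * d"
        using sum_list_shift[of d ys] len ys(3) by simp
      then have "i + sum_list xs - d = m + sum_list ys" by (simp add: m_def algebra_simps)
      then show ?thesis using ys(2) carry_step_eq[OF b0, of d i xs] by simp
    qed
    ultimately show "xs \<in> {xs\<in>DT. carry_step b d i xs = j}" by blast
  qed
  have cnt: "card {xs\<in>DT. carry_step b d i xs = j} = card {ys \<in> cY b n. ?P ys}"
    unfolding img by (rule card_image) (simp add: inj_on_def)
  have cnt2: "int (card {ys \<in> cY b n. ?P ys}) =
      cF b n (int b * j + int b - 1 - m) - cF b n (int b * j - 1 - m)"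
    unfolding card_filter_int[OF finite_Y] cF_def sum_subtractf[symmetric]
  proof (rule sum.cong[OF refl])
    fix ys
    show "(if ?P ys then 1 else 0) =
      (if sum_list ys \<le> int b * j + int b - 1 - m then 1 else 0) -
      (if sum_list ys \<le> int b * j - 1 - m then 1 else 0 :: int)"
      using div_iff[of "int b" "m + sum_list ys" j] b0 by auto
  qed
  have closed: "cF b n (int b * j + int b - 1 - m) - cF b n (int b * j - 1 - m) =
      (\<Sum>k\<le>Suc n. (-1)^k * int (Suc n choose k) * Cp (N - int b * int k) n)"
    unfolding F_closed sum_subtractf[symmetric] comb[of n "\<lambda>k. Cp (N - int b * int k) n", symmetric]
  proof (rule sum.cong[OF refl])
    fix k
    show "(-1)^k * int (n choose k) * Cp (int b * j + int b - 1 - m - int b * int k + int n) n -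
          (-1)^k * int (n choose k) * Cp (int b * j - 1 - m - int b * int k + int n) n =
          (-1)^k * int (n choose k) * (Cp (N - int b * int k) n - Cp (N - int b * int (Suc k)) n)"
      by (simp add: N_def algebra_simps)
  qed
  define h where "h = (\<lambda>k::int. (-1) ^ nat k * real ((n + 1) choose nat k) *
        real (nat (int n + int b * (j + 1 - k) - d * (int n - 1) - i - 1) choose n))"
  define U where "U = j - m div int b"
  have fl: "\<lfloor>real_of_int (d * (int n - 1) + i) / real b\<rfloor> = m div int b"
    using floor_divide_of_int_eq[of m "int b", where 'a=real] by (simp add: m_def)
  have conv: "real_of_int (\<Sum>k\<le>Suc n. (-1)^k * int (Suc n choose k) * Cp (N - int b * int k) n)
      = sum h {0..int (Suc n)}"
  proof -
    have "sum h {0..int (Suc n)} = (\<Sum>k\<le>Suc n. h (int k))"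
      unfolding int_image_atMost[symmetric] by (simp add: sum.reindex)
    also have "\<dots> = (\<Sum>k\<le>Suc n. real_of_int ((-1)^k * int (Suc n choose k) * Cp (N - int b * int k) n))"
    proof (rule sum.cong[OF refl])
      fix k
      have eq: "int n + int b * (j + 1 - int k) - d * (int n - 1) - i - 1 = N - int b * int k"
        by (simp add: N_def m_def algebra_simps)
      show "h (int k) = real_of_int ((-1)^k * int (Suc n choose k) * Cp (N - int b * int k) n)"
        unfolding h_def eq by (simp add: Cp_eq[OF n1])
    qed
    finally show ?thesis by simp
  qed
  have W1: "sum h {0..int (Suc n)} = sum h {0..max U (int (Suc n))}"
  proof (rule sum.mono_neutral_left)
    show "\<forall>k\<in>{0..max U (int (Suc n))} - {0..int (Suc n)}. h k = 0"
    proof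
      fix k assume "k \<in> {0..max U (int (Suc n))} - {0..int (Suc n)}"
      then have "n + 1 < nat k" by auto
      then show "h k = 0" by (simp add: h_def)
    qed
  qed auto
  have W2: "sum h {0..U} = sum h {0..max U (int (Suc n))}"
  proof (rule sum.mono_neutral_left)
    show "\<forall>k\<in>{0..max U (int (Suc n))} - {0..U}. h k = 0"
    proof
      fix k assume "k \<in> {0..max U (int (Suc n))} - {0..U}"
      then have k: "k \<ge> U + 1" by auto
      have "j + 1 - k \<le> m div int b" using k by (simp add: U_def)
      then have "int b * (j + 1 - k) \<le> int b * (m div int b)"
        using b0 by (intro mult_left_mono) auto
      also have "\<dots> \<le> m" using b0 minus_mod_eq_mult_div[of m "int b"]
        pos_mod_sign[of "int b" m] by linarith
      finally have "nat (int n + int b * (j + 1 - k) - d * (int n - 1) - i - 1) < n"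
        using n1 by (simp add: m_def)
      then show "h k = 0" by (simp add: h_def)
    qed
  qed auto
  have "carry_trans n b d i j = 1 / real b ^ n * real_of_int (int (card {ys \<in> cY b n. ?P ys}))"
    using trans cnt by simp
  also have "\<dots> = 1 / real b ^ n * sum h {0..U}"
    unfolding cnt2 closed conv W1 W2 ..
  finally show ?thesis unfolding h_def U_def fl .
qed

end
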